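(* Let $n\ge2$, $s\in\mathbb{R}$ with $s\neq1$, and $k>0$. If $\phi\in C^1(\mathbb{R}^n)$ satisfies $\operatorname{supp}\phi\subset B(k)$, then $$\|(1+k-r)^{(s-2)/2}\phi\|_{L^2(\mathbb{R}^n)}\le C\Big(\|(1+k-r)^{s/2}\partial_r\phi\|_{L^2(\mathbb{R}^n)}+\big\|(1+k-r)^{s/2}\tfrac{\phi}{r}\big\|_{L^2(\mathbb{R}^n)}\Big),$$ whenever the right-hand side is finite, where $C$ depends only on $n$ and $s$ (in particular it is independent of $k$).
   Context: $r=|x|$, $\partial_r=\frac{x}{|x|}\cdot\nabla$ denotes the radial derivative, and $B(k)=\{x\in\mathbb{R}^n:|x|\le k\}$. All weights are evaluated only on $B(k)$, where $1+k-r\ge1$. *)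

theory Defs
  imports "HOL-Analysis.Analysis"
begin

definition wt :: "real \<Rightarrow> real \<Rightarrow> real^'n \<Rightarrow> real" where
  "wt k a x = (1 + k - norm x) powr a"

text \<open>Radial derivative (x/|x|) . grad phi, given the gradient field g of phi.\<close>
definition radial_deriv :: "(real^'n \<Rightarrow> real^'n) \<Rightarrow> real^'n \<Rightarrow> real" where
  "radial_deriv g x = (x /\<^sub>R norm x) \<bullet> g x"

text \<open>L^2(R^n) norm (meaningful for square-integrable f).\<close>
definition L2norm :: "(real^'n \<Rightarrow> real) \<Rightarrow> real" where
  "L2norm f = sqrt (\<integral>x. (f x)\<^sup>2 \<partial>lborel)"

end

theory Submission
  imports Defs
begin

lemma scale_integral:
  fixes h :: "'a::euclidean_space \<Rightarrow> real" and c :: real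
  assumes c: "c > 0" and h: "integrable lborel h"
  shows "integrable lborel (\<lambda>x. h (c *\<^sub>R x))"
    and "(\<integral>x. h (c *\<^sub>R x) \<partial>lborel) = (\<integral>x. h x \<partial>lborel) / c ^ DIM('a)"
proof -
  have hm[measurable]: "h \<in> borel_measurable borel" using h by auto
  have eq: "lborel = density (distr lborel borel (\<lambda>x::'a. 0 + c *\<^sub>R x)) (\<lambda>_. \<bar>c\<bar>^DIM('a))"
    using lborel_affine[of c "0::'a"] c by simp
  have "integrable (density (distr lborel borel (\<lambda>x::'a. 0 + c *\<^sub>R x)) (\<lambda>_. \<bar>c\<bar>^DIM('a))) h"
    using h eq by simp
  then have "integrable (distr lborel borel (\<lambda>x::'a. 0 + c *\<^sub>R x)) (\<lambda>x. \<bar>c\<bar>^DIM('a) *\<^sub>R h x)"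
    by (subst (asm) integrable_density) auto
  then have "integrable lborel (\<lambda>x. \<bar>c\<bar>^DIM('a) *\<^sub>R h (c *\<^sub>R x))"
    by (subst (asm) integrable_distr_eq) auto
  then show i: "integrable lborel (\<lambda>x. h (c *\<^sub>R x))"
    using c by simp
  have "(\<integral>x. h x \<partial>lborel) = integral\<^sup>L (density (distr lborel borel (\<lambda>x::'a. 0 + c *\<^sub>R x)) (\<lambda>_. \<bar>c\<bar>^DIM('a))) h"
    using eq by simp
  also have "\<dots> = integral\<^sup>L (distr lborel borel (\<lambda>x::'a. 0 + c *\<^sub>R x)) (\<lambda>x. \<bar>c\<bar>^DIM('a) *\<^sub>R h x)"
    by (subst integral_density) auto
  also have "\<dots> = (\<integral>x. \<bar>c\<bar>^DIM('a) *\<^sub>R h (c *\<^sub>R x) \<partial>lborel)"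
    by (subst integral_distr) auto
  also have "\<dots> = c^DIM('a) * (\<integral>x. h (c *\<^sub>R x) \<partial>lborel)"
    using c by simp
  finally show "(\<integral>x. h (c *\<^sub>R x) \<partial>lborel) = (\<integral>x. h x \<partial>lborel) / c ^ DIM('a)"
    using c by (simp add: field_simps)
qed


lemma int_prod:
  fixes u v :: "'a \<Rightarrow> real"
  assumes "integrable M (\<lambda>x. (u x)\<^sup>2)" "integrable M (\<lambda>x. (v x)\<^sup>2)"
    and [measurable]: "u \<in> borel_measurable M" "v \<in> borel_measurable M"
  shows "integrable M (\<lambda>x. u x * v x)"
proof (rule Bochner_Integration.integrable_bound)
  show "integrable M (\<lambda>x. (u x)\<^sup>2 + (v x)\<^sup>2)" using assms by auto
  show "AE x in M. norm (u x * v x) \<le> norm ((u x)\<^sup>2 + (v x)\<^sup>2)"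
  proof (intro AE_I2)
    fix x
    have "2 * \<bar>u x\<bar> * \<bar>v x\<bar> \<le> (u x)\<^sup>2 + (v x)\<^sup>2"
      using sum_squares_bound[of "\<bar>u x\<bar>" "\<bar>v x\<bar>"] by simp
    moreover have "\<bar>u x\<bar> * \<bar>v x\<bar> \<ge> 0" by simp
    ultimately have "\<bar>u x\<bar> * \<bar>v x\<bar> \<le> (u x)\<^sup>2 + (v x)\<^sup>2" by linarith
    then show "norm (u x * v x) \<le> norm ((u x)\<^sup>2 + (v x)\<^sup>2)"
      by (simp add: abs_mult)
  qed
qed measurable

lemma amgm:
  fixes a b e :: real assumes e: "e > 0"
  shows "2 * \<bar>a * b\<bar> \<le> e * a\<^sup>2 + b\<^sup>2 / e"
proof -
  have "0 \<le> (e * \<bar>a\<bar> - \<bar>b\<bar>)\<^sup>2" by simp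
  also have "\<dots> = e * (e * a\<^sup>2 + b\<^sup>2 / e - 2 * \<bar>a * b\<bar>)"
    using e by (simp add: power2_eq_square abs_mult field_simps)
  finally show ?thesis using e by (simp add: zero_le_mult_iff)
qed

lemma eqn_alg: "(n::real) * (B + C) = B + (n-1)/2*C + ((n-1)*B + (n+1)/2*C)"
  by (simp add: field_simps)

lemma div_step:
  fixes a A X :: real assumes a: "a > 0" and h: "a/2*A \<le> X/a" shows "A \<le> 2*X/(a*a)"
proof -
  have "a/2*A*a \<le> X" using h a by (simp add: pos_le_divide_eq)
  then have "A * (a*a) \<le> 2*X" by (simp add: algebra_simps)
  then show ?thesis using a by (simp add: pos_le_divide_eq)
qed

lemma powr_hs1: "(x::real) powr ((s-2)/2) * x powr (s/2) = x powr (s-1)"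
proof -
  have "(s-2)/2 + s/2 = s-1" by (simp add: field_simps)
  then show ?thesis by (metis powr_add)
qed

lemma powr_hs2: "(x::real) powr ((s-2)/2) * x powr ((s-2)/2) = x powr (s-1-1)"
proof -
  have "(s-2)/2 + (s-2)/2 = s-1-1" by (simp add: field_simps)
  then show ?thesis by (metis powr_add)
qed

lemma geq_alg:
  fixes t r p q A2 A1 a b s :: real
  assumes "0 < t" "0 < r" "p * p = A2" "p * q = A1"
  shows "((1 - s) * (p * a * (p * a)) + 2 * (p * a * (q * b)) / r - p * a * (q * a) / (t * r)) / t =
    (A1 * (2 * (a * b)) - (s - 1) * A2 * r * (a * a)) * (inverse t * inverse r) -
    A1 * (a * a) * (r * (inverse t * inverse r * (inverse t * inverse r)))"
proof -
  have e1: "p * a * (p * a) = A2 * (a * a)" "p * a * (q * b) = A1 * (a * b)" "p * a * (q * a) = A1 * (a * a)"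
    using assms by (simp_all add: algebra_simps flip: assms(3,4))
  show ?thesis unfolding e1 using assms(1,2) by (simp add: field_simps)
qed

context
  fixes k s :: real and \<phi> :: "real^'n \<Rightarrow> real" and \<phi>' :: "real^'n \<Rightarrow> real^'n"
  assumes kpos: "k > 0"
    and der: "\<forall>x. (\<phi> has_derivative (\<lambda>h. \<phi>' x \<bullet> h)) (at x)"
    and contd: "continuous_on UNIV \<phi>'"
    and supp: "closure {x. \<phi> x \<noteq> 0} \<subseteq> cball 0 k"
begin

lemma phi_zero: "norm y > k \<Longrightarrow> \<phi> y = 0"
  using supp closure_subset[of "{x. \<phi> x \<noteq> 0}"] by (force simp: dist_norm)

lemma phi_cont: "continuous_on UNIV \<phi>"
  using der has_derivative_continuous continuous_at_imp_continuous_on by blast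

lemma phi_meas[measurable]: "\<phi> \<in> borel_measurable borel"
  by (rule borel_measurable_continuous_onI[OF phi_cont])

lemma phi'_meas[measurable]: "\<phi>' \<in> borel_measurable borel"
  by (rule borel_measurable_continuous_onI[OF contd])

lemma wt_meas[measurable]: "wt k e \<in> borel_measurable borel"
  unfolding wt_def by measurable

lemma rd_meas[measurable]: "radial_deriv \<phi>' \<in> borel_measurable borel"
  unfolding radial_deriv_def by measurable

lemma a_meas[measurable]: "(\<lambda>x. wt k e x * \<phi> x) \<in> borel_measurable borel"
  by measurable

lemma c_meas[measurable]: "(\<lambda>x. wt k e x * (\<phi> x / norm x)) \<in> borel_measurable borel"
  by measurable

lemma b_meas[measurable]: "(\<lambda>x. wt k e x * radial_deriv \<phi>' x) \<in> borel_measurable borel"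
  by measurable

lemma a_sq_int: "integrable lborel (\<lambda>x. (wt k e x * \<phi> x)\<^sup>2)"
proof -
  have "compact (\<phi> ` cball 0 k)"
    using phi_cont by (intro compact_continuous_image) (auto intro: continuous_on_subset)
  then obtain M where M: "\<And>y. y \<in> cball 0 k \<Longrightarrow> \<bar>\<phi> y\<bar> \<le> M"
    using compact_imp_bounded bounded_real by (metis image_eqI)
  define W where "W = (1 + k) powr \<bar>e\<bar>"
  have wb: "\<bar>wt k e y\<bar> \<le> W" if "norm y \<le> k" for y
  proof -
    have d1: "1 \<le> 1 + k - norm y" "1 + k - norm y \<le> 1 + k" using that by auto
    have "\<bar>wt k e y\<bar> = (1 + k - norm y) powr e" using d1 by (simp add: wt_def)
    also have "\<dots> \<le> (1 + k - norm y) powr \<bar>e\<bar>" using d1 by (intro powr_mono) auto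
    also have "\<dots> \<le> W" unfolding W_def using d1 by (intro powr_mono2) auto
    finally show ?thesis .
  qed
  have int: "integrable lborel (\<lambda>x. indicator (cball (0::real^'n) k) x *\<^sub>R ((W * M)\<^sup>2))"
    by (intro borel_integrable_compact) auto
  show ?thesis
  proof (rule Bochner_Integration.integrable_bound[OF int])
    show "AE x in lborel. norm ((wt k e x * \<phi> x)\<^sup>2) \<le> norm (indicator (cball (0::real^'n) k) x *\<^sub>R ((W * M)\<^sup>2))"
    proof (intro AE_I2)
      fix x :: "real^'n"
      show "norm ((wt k e x * \<phi> x)\<^sup>2) \<le> norm (indicator (cball (0::real^'n) k) x *\<^sub>R ((W * M)\<^sup>2))"
      proof (cases "norm x \<le> k")
        case True
        have "\<bar>wt k e x * \<phi> x\<bar> \<le> W * M"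
          using wb[OF True] M[of x] True by (simp add: abs_mult mult_mono')
        then have "(wt k e x * \<phi> x)\<^sup>2 \<le> (W * M)\<^sup>2"
          by (metis abs_le_square_iff abs_of_nonneg abs_ge_zero order_trans power2_abs)
        then show ?thesis using True by simp
      next
        case False then show ?thesis using phi_zero by simp
      qed
    qed
  qed measurable
qed


definition "fA x = wt k ((s-2)/2) x * \<phi> x"
definition "fB x = wt k (s/2) x * radial_deriv \<phi>' x"
definition "fC x = wt k (s/2) x * (\<phi> x / norm x)"
definition "ff x = fA x * fC x"
definition "gg x = -(s-1) * (fA x)\<^sup>2 + 2 * (fA x * fB x) - fA x * fC x"

lemma phi_ray_deriv:
  "((\<lambda>\<tau>. \<phi> (\<tau> *\<^sub>R x)) has_real_derivative (\<phi>' (t *\<^sub>R x) \<bullet> x)) (at t)"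
proof -
  have "((\<lambda>\<tau>. \<phi> (\<tau> *\<^sub>R x)) has_derivative (\<lambda>h. \<phi>' (t *\<^sub>R x) \<bullet> (h *\<^sub>R x))) (at t)"
  proof -
    have l: "((\<lambda>\<tau>::real. \<tau> *\<^sub>R x) has_derivative (\<lambda>h. h *\<^sub>R x)) (at t)"
      by (rule derivative_eq_intros refl)+ simp
    from diff_chain_at[OF l der[rule_format, of "t *\<^sub>R x"]] show ?thesis by (simp add: o_def)
  qed
  then show ?thesis
    unfolding has_field_derivative_def
    by (rule has_derivative_eq_rhs) (simp add: fun_eq_iff mult.commute)
qed

lemma ray_deriv:
  assumes x: "x \<noteq> 0" and t: "t > 0"
  shows "((\<lambda>\<tau>. ff (\<tau> *\<^sub>R x)) has_real_derivative gg (t *\<^sub>R x) / t) (at t)"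
proof (cases "t * norm x < 1 + k")
  case True
  define r where "r = norm x"
  have r: "r > 0" using x by (simp add: r_def)
  define S where "S = {\<tau>::real. 0 < \<tau> \<and> \<tau> * r < 1 + k}"
  have Sopen: "open S" unfolding S_def
    by (intro open_Collect_conj open_Collect_less continuous_intros)
  have tS: "t \<in> S" using t True by (simp add: S_def r_def)
  define P where "P = (\<lambda>\<tau>. \<phi>(\<tau> *\<^sub>R x))"
  define h where "h = (\<lambda>\<tau>. ((1+k-\<tau>*r) powr (s-1) * (P \<tau> * P \<tau>)) * inverse (\<tau>*r))"
  have eqS: "h \<tau> = ff (\<tau> *\<^sub>R x)" if "\<tau> \<in> S" for \<tau>
  proof -
    have tp: "\<tau> > 0" using that by (simp add: S_def)
    have "(1+k-\<tau>*r) powr ((s-2)/2) * (1+k-\<tau>*r) powr (s/2) = (1+k-\<tau>*r) powr (s-1)"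
      by (rule powr_hs1)
    then show ?thesis using tp
      by (simp add: h_def P_def ff_def fA_def fC_def wt_def r_def field_simps power2_eq_square)
  qed
  define D where "D = 1 + k - t * r"
  have Dpos: "D > 0" using True by (simp add: D_def r_def)
  have d0: "((\<lambda>\<tau>. 1+k-\<tau>*r) has_real_derivative (-r)) (at t)"
    by (auto intro!: derivative_eq_intros)
  have d1: "((\<lambda>\<tau>. (1+k-\<tau>*r) powr (s-1)) has_real_derivative (s-1) * D powr (s-1 - of_nat 1) * (-r)) (at t)"
    unfolding D_def by (rule DERIV_fun_powr[OF d0]) (use Dpos D_def in simp)
  have dP: "(P has_real_derivative (\<phi>' (t *\<^sub>R x) \<bullet> x)) (at t)"
    unfolding P_def by (rule phi_ray_deriv)
  have d2: "((\<lambda>\<tau>. P \<tau> * P \<tau>) has_real_derivative P t * (\<phi>' (t *\<^sub>R x) \<bullet> x) + (\<phi>' (t *\<^sub>R x) \<bullet> x) * P t) (at t)"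
    by (rule DERIV_mult'[OF dP dP])
  have d3: "((\<lambda>\<tau>. inverse (\<tau>*r)) has_real_derivative - (r * inverse((t*r) ^ Suc (Suc 0)))) (at t)"
    by (rule DERIV_inverse_fun) (use r t in \<open>auto intro!: derivative_eq_intros\<close>)
  have hder: "(h has_real_derivative
      ((1+k-t*r) powr (s-1) * (P t * P t)) * (- (r * inverse((t*r) ^ Suc (Suc 0))))
      + ((1+k-t*r) powr (s-1) * (P t * (\<phi>' (t *\<^sub>R x) \<bullet> x) + (\<phi>' (t *\<^sub>R x) \<bullet> x) * P t)
         + (s-1) * D powr (s-1 - of_nat 1) * (-r) * (P t * P t)) * inverse (t*r)) (at t)"
    unfolding h_def by (rule DERIV_mult'[OF DERIV_mult'[OF d1 d2] d3])
  have geq: "gg (t *\<^sub>R x) / t = 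
      ((1+k-t*r) powr (s-1) * (P t * P t)) * (- (r * inverse((t*r) ^ Suc (Suc 0))))
      + ((1+k-t*r) powr (s-1) * (P t * (\<phi>' (t *\<^sub>R x) \<bullet> x) + (\<phi>' (t *\<^sub>R x) \<bullet> x) * P t)
         + (s-1) * D powr (s-1 - of_nat 1) * (-r) * (P t * P t)) * inverse (t*r)"
  proof -
    have e1: "D powr ((s-2)/2) * D powr ((s-2)/2) = D powr (s - 1 - of_nat 1)"
      using powr_hs2 by simp
    have e2: "D powr ((s-2)/2) * D powr (s/2) = D powr (s-1)"
      by (rule powr_hs1)
    have rd: "radial_deriv \<phi>' (t *\<^sub>R x) = (\<phi>' (t *\<^sub>R x) \<bullet> x) / r"
      using t r by (simp add: radial_deriv_def r_def inner_commute field_simps)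
    have wA: "wt k e (t *\<^sub>R x) = D powr e" for e
      using t by (simp add: wt_def D_def r_def)
    show ?thesis
      unfolding gg_def fA_def fB_def fC_def wA rd
      using t r e1 e2
      apply (simp add: P_def D_def[symmetric] r_def[symmetric] power2_eq_square)
      by (rule geq_alg)
  qed
  show ?thesis
    using has_field_derivative_transform_within_open[OF hder Sopen tS eqS] geq by simp
next
  case False
  have Sopen: "open {\<tau>::real. \<tau> * norm x > k}"
    by (intro open_Collect_less continuous_intros)
  have tS: "t \<in> {\<tau>::real. \<tau> * norm x > k}" using False kpos by simp
  have z: "ff (\<tau> *\<^sub>R x) = 0" if "\<tau> \<in> {\<tau>::real. \<tau> * norm x > k}" for \<tau>
  proof -
    have tp: "\<tau> > 0"
    proof (rule ccontr)
      assume "\<not> \<tau> > 0"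
      then have "\<tau> * norm x \<le> 0" by (simp add: mult_nonpos_nonneg)
      with that kpos show False by simp
    qed
    have "norm (\<tau> *\<^sub>R x) > k" using that tp by simp
    then show ?thesis using phi_zero by (simp add: ff_def fA_def)
  qed
  have g0: "gg (t *\<^sub>R x) = 0"
    using z[OF tS] tS t phi_zero[of "t *\<^sub>R x"] by (simp add: gg_def fA_def)
  show ?thesis
    using has_field_derivative_transform_within_open[OF DERIV_const Sopen tS, of 0 "\<lambda>\<tau>. ff (\<tau> *\<^sub>R x)"] z g0
    by simp
qed

lemma gg_meas[measurable]: "gg \<in> borel_measurable borel"
  unfolding gg_def fA_def fB_def fC_def by measurable
lemma ff_meas[measurable]: "ff \<in> borel_measurable borel"
  unfolding ff_def fA_def fB_def fC_def by measurable

context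
  assumes ib: "integrable lborel (\<lambda>x. (fB x)\<^sup>2)" and ic: "integrable lborel (\<lambda>x. (fC x)\<^sup>2)"
begin

lemma fA_int: "integrable lborel (\<lambda>x. (fA x)\<^sup>2)"
  unfolding fA_def by (rule a_sq_int)

lemma AB_int: "integrable lborel (\<lambda>x. fA x * fB x)"
  by (rule int_prod[OF fA_int ib]) (auto simp: fA_def fB_def)

lemma AC_int: "integrable lborel (\<lambda>x. fA x * fC x)"
  by (rule int_prod[OF fA_int ic]) (auto simp: fA_def fC_def)

lemma ff_int: "integrable lborel ff"
  using AC_int unfolding ff_def by simp

lemma gg_int: "integrable lborel gg"
  unfolding gg_def using fA_int AB_int AC_int by auto

lemma fubini_identity:
  "(\<integral>x. gg x \<partial>lborel) = - real CARD('n) * (\<integral>x. ff x \<partial>lborel)"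
proof -
  define n where "n = CARD('n)"
  have n1: "n \<ge> 1" unfolding n_def by (simp add: Suc_le_eq)
  define F where "F = (\<lambda>(t::real) (x::real^'n). indicator {1..2::real} t * (gg (t *\<^sub>R x) / t))"
  have Fm: "(\<lambda>(t,x). F t x) \<in> borel_measurable (lborel \<Otimes>\<^sub>M lborel)"
    unfolding F_def by measurable
  have gsc: "integrable lborel (\<lambda>x. u (t *\<^sub>R x))" "(\<integral>x. u (t *\<^sub>R x) \<partial>lborel) = (\<integral>x. u x \<partial>lborel) / t ^ n"
    if "t > 0" "integrable lborel u" for t and u :: "real^'n \<Rightarrow> real"
    using scale_integral[OF that] by (auto simp: n_def)
  have gabs: "integrable lborel (\<lambda>x. \<bar>gg x\<bar>)" using gg_int by auto
  have Fx: "integrable lborel (F t)" for t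
    by (cases "t \<in> {1..2}") (auto simp: F_def intro!: gsc(1) gg_int)
  have Fnorm: "(\<integral>x. norm (F t x) \<partial>lborel) = (\<integral>x. \<bar>gg x\<bar> \<partial>lborel) / t^(n+1) * indicator {1..2} t" for t
  proof (cases "t \<in> {1..2}")
    case True
    then have tp: "t > 0" by auto
    have "(\<integral>x. norm (F t x) \<partial>lborel) = (\<integral>x. \<bar>gg (t *\<^sub>R x)\<bar> / t \<partial>lborel)"
      using True tp by (simp add: F_def)
    also have "\<dots> = (\<integral>x. \<bar>gg (t *\<^sub>R x)\<bar> \<partial>lborel) / t" by simp
    also have "\<dots> = (\<integral>x. \<bar>gg x\<bar> \<partial>lborel) / t^n / t" using gsc(2)[OF tp gabs] by simp
    finally show ?thesis using True by simp
  qed (simp add: F_def)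
  have Fval: "(\<integral>x. F t x \<partial>lborel) = (\<integral>x. gg x \<partial>lborel) / t^(n+1) * indicator {1..2} t" for t
  proof (cases "t \<in> {1..2}")
    case True
    then have tp: "t > 0" by auto
    have "(\<integral>x. F t x \<partial>lborel) = (\<integral>x. gg (t *\<^sub>R x) / t \<partial>lborel)"
      using True tp by (simp add: F_def)
    also have "\<dots> = (\<integral>x. gg (t *\<^sub>R x) \<partial>lborel) / t" by simp
    also have "\<dots> = (\<integral>x. gg x \<partial>lborel) / t^n / t" using gsc(2)[OF tp gg_int] by simp
    finally show ?thesis using True by simp
  qed (simp add: F_def)
  have I1: "integrable lborel (\<lambda>t. \<integral>x. norm (F t x) \<partial>lborel)"
    unfolding Fnorm by (rule borel_integrable_atLeastAtMost) (auto intro!: continuous_intros)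
  have Fint: "integrable (lborel \<Otimes>\<^sub>M lborel) (\<lambda>(t,x). F t x)"
    by (rule lborel_pair.Fubini_integrable[OF Fm]) (use I1 Fx in auto)
  have fub: "(\<integral>x. (\<integral>t. F t x \<partial>lborel) \<partial>lborel) = (\<integral>t. (\<integral>x. F t x \<partial>lborel) \<partial>lborel)"
    by (rule lborel_pair.Fubini_integral[OF Fint])
  have FTC1: "(\<integral>t. indicator {1..2} t *\<^sub>R (1 / t^(n+1)) \<partial>lborel) =
      (\<lambda>t. - 1 / (real n * t^n)) 2 - (\<lambda>t. - 1 / (real n * t^n)) 1"
  proof (rule integral_FTC_atLeastAtMost)
    fix t :: real assume t: "1 \<le> t" "t \<le> 2"
    have "((\<lambda>t. - 1 / (real n * t^n)) has_real_derivative 1 / t^(n+1)) (at t)"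
      using t n1
      apply (auto intro!: derivative_eq_intros)
      apply (subgoal_tac "t^n = t * t^(n - Suc 0)")
       apply (simp add: field_simps)
      using power_minus_mult[of n t] by (simp add: mult.commute)
    then show "((\<lambda>t. - 1 / (real n * t^n)) has_vector_derivative 1 / t^(n+1)) (at t within {1..2})"
      by (simp add: has_real_derivative_iff_has_vector_derivative has_vector_derivative_at_within)
  qed (auto intro!: continuous_intros)
  have RHS: "(\<integral>t. (\<integral>x. F t x \<partial>lborel) \<partial>lborel) = (\<integral>x. gg x \<partial>lborel) * ((1 - 1/2^n) / n)"
  proof -
    have "(\<integral>t. (\<integral>x. F t x \<partial>lborel) \<partial>lborel) = (\<integral>t. (\<integral>x. gg x \<partial>lborel) * (indicator {1..2} t *\<^sub>R (1 / t^(n+1))) \<partial>lborel)"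
      unfolding Fval by (rule Bochner_Integration.integral_cong) auto
    also have "\<dots> = (\<integral>x. gg x \<partial>lborel) * (\<integral>t. indicator {1..2} t *\<^sub>R (1 / t^(n+1)) \<partial>lborel)"
      by (rule integral_mult_right_zero)
    also have "\<dots> = (\<integral>x. gg x \<partial>lborel) * ((1 - 1/2^n) / n)"
      unfolding FTC1 using n1 by (simp add: field_simps)
    finally show ?thesis .
  qed
  have AEint: "AE x in lborel. integrable lborel (\<lambda>t. F t x)"
    using lborel_pair.AE_integrable_snd[OF Fint] by simp
  have inner: "(\<integral>t. F t x \<partial>lborel) = ff (2 *\<^sub>R x) - ff x"
    if x: "x \<noteq> 0" and ix: "integrable lborel (\<lambda>t. F t x)" for x
  proof -
    have h1: "((\<lambda>t. F t x) has_integral (\<integral>t. F t x \<partial>lborel)) UNIV"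
      by (rule has_integral_integral_lborel[OF ix])
    have "((\<lambda>t. gg (t *\<^sub>R x) / t) has_integral (ff (2 *\<^sub>R x) - ff (1 *\<^sub>R x))) {1..2}"
    proof (rule fundamental_theorem_of_calculus)
      fix t :: real assume "t \<in> {1..2}"
      then have "t > 0" by auto
      from ray_deriv[OF x this] show "((\<lambda>\<tau>. ff (\<tau> *\<^sub>R x)) has_vector_derivative gg (t *\<^sub>R x) / t) (at t within {1..2})"
        by (simp add: has_real_derivative_iff_has_vector_derivative has_vector_derivative_at_within)
    qed simp
    then have "((\<lambda>t. if t \<in> {1..2} then gg (t *\<^sub>R x) / t else 0) has_integral (ff (2 *\<^sub>R x) - ff x)) UNIV"
      by (intro has_integral_restrict_UNIV[THEN iffD2]) simp
    moreover have "(\<lambda>t. if t \<in> {1..2} then gg (t *\<^sub>R x) / t else 0) = (\<lambda>t. F t x)"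
      by (auto simp: F_def fun_eq_iff)
    ultimately show ?thesis using h1 has_integral_unique by metis
  qed
  have LHS: "(\<integral>x. (\<integral>t. F t x \<partial>lborel) \<partial>lborel) = (\<integral>x. ff (2 *\<^sub>R x) - ff x \<partial>lborel)"
  proof (rule integral_cong_AE)
    show "(\<lambda>x. \<integral>t. F t x \<partial>lborel) \<in> borel_measurable lborel"
      using lborel_pair.integrable_snd[OF Fint] by (simp add: borel_measurable_integrable)
    show "(\<lambda>x. ff (2 *\<^sub>R x) - ff x) \<in> borel_measurable lborel" by measurable
    show "AE x in lborel. (\<integral>t. F t x \<partial>lborel) = ff (2 *\<^sub>R x) - ff x"
      using AEint AE_lborel_singleton[of 0] by eventually_elim (simp add: inner)
  qed
  have LHS2: "(\<integral>x. ff (2 *\<^sub>R x) - ff x \<partial>lborel) = (\<integral>x. ff x \<partial>lborel) / 2^n - (\<integral>x. ff x \<partial>lborel)"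
    using gsc[of 2 ff] ff_int by (simp add: Bochner_Integration.integral_diff)
  have "(\<integral>x. gg x \<partial>lborel) * ((1 - 1/2^n) / n) = (\<integral>x. ff x \<partial>lborel) / 2^n - (\<integral>x. ff x \<partial>lborel)"
    using fub RHS LHS LHS2 by simp
  moreover have "(1 - 1/2^n) \<noteq> (0::real)"
  proof -
    have "(1::real) < 2^n" using n1 by (intro one_less_power) auto
    then have "1/(2::real)^n < 1" by simp
    then show ?thesis by linarith
  qed
  ultimately have eq: "(\<integral>x. gg x \<partial>lborel) * ((1 - 1/2^n) / n) = (\<integral>x. ff x \<partial>lborel) / 2^n - (\<integral>x. ff x \<partial>lborel)"
    and q: "(1 - 1/2^n) \<noteq> (0::real)" by auto
  have "(\<integral>x. ff x \<partial>lborel) / 2^n - (\<integral>x. ff x \<partial>lborel) = (- (\<integral>x. ff x \<partial>lborel)) * (1 - 1/2^n)"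
    by (simp add: algebra_simps)
  moreover have "(\<integral>x. gg x \<partial>lborel) * ((1 - 1/2^n) / n) = ((\<integral>x. gg x \<partial>lborel) / n) * (1 - 1/2^n)"
    by simp
  ultimately have "((\<integral>x. gg x \<partial>lborel) / n) * (1 - 1/2^n) = (- (\<integral>x. ff x \<partial>lborel)) * (1 - 1/2^n)"
    using eq by simp
  then have "(\<integral>x. gg x \<partial>lborel) / n = - (\<integral>x. ff x \<partial>lborel)"
    using q mult_right_cancel by blast
  then show ?thesis using n1 unfolding n_def[symmetric]
    by (simp add: field_simps)
qed

lemma int_amgm:
  fixes u v :: "real^'n \<Rightarrow> real" and e :: real
  assumes e: "e > 0" and iu: "integrable lborel (\<lambda>x. (u x)\<^sup>2)" and iv: "integrable lborel (\<lambda>x. (v x)\<^sup>2)"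
    and iuv: "integrable lborel (\<lambda>x. u x * v x)"
  shows "2 * \<bar>\<integral>x. u x * v x \<partial>lborel\<bar> \<le> e * (\<integral>x. (u x)\<^sup>2 \<partial>lborel) + (\<integral>x. (v x)\<^sup>2 \<partial>lborel) / e"
proof -
  have "2 * \<bar>\<integral>x. u x * v x \<partial>lborel\<bar> \<le> 2 * (\<integral>x. \<bar>u x * v x\<bar> \<partial>lborel)"
    by (simp add: integral_abs_bound)
  also have "\<dots> = (\<integral>x. 2 * \<bar>u x * v x\<bar> \<partial>lborel)" by simp
  also have "\<dots> \<le> (\<integral>x. e * (u x)\<^sup>2 + (v x)\<^sup>2 / e \<partial>lborel)"
    by (rule integral_mono) (use iu iv iuv amgm[OF e] in auto)
  also have "\<dots> = e * (\<integral>x. (u x)\<^sup>2 \<partial>lborel) + (\<integral>x. (v x)\<^sup>2 \<partial>lborel) / e"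
    using iu iv by simp
  finally show ?thesis .
qed

lemma main_ineq:
  assumes s1: "s \<noteq> 1"
  shows "sqrt (\<integral>x. (fA x)\<^sup>2 \<partial>lborel) \<le>
     sqrt (2 * real CARD('n) * (real CARD('n) + 1) / (s-1)\<^sup>2) *
       (sqrt (\<integral>x. (fB x)\<^sup>2 \<partial>lborel) + sqrt (\<integral>x. (fC x)\<^sup>2 \<partial>lborel))"
proof -
  define n where "n = real CARD('n)"
  have n1: "n \<ge> 1" unfolding n_def by (simp add: Suc_le_eq)
  define A where "A = (\<integral>x. (fA x)\<^sup>2 \<partial>lborel)"
  define B where "B = (\<integral>x. (fB x)\<^sup>2 \<partial>lborel)"
  define C where "C = (\<integral>x. (fC x)\<^sup>2 \<partial>lborel)"
  define P where "P = (\<integral>x. fA x * fB x \<partial>lborel)"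
  define Q where "Q = (\<integral>x. fA x * fC x \<partial>lborel)"
  have A0: "A \<ge> 0" "B \<ge> 0" "C \<ge> 0" unfolding A_def B_def C_def by auto
  have "(\<integral>x. gg x \<partial>lborel) = -(s-1) * A + 2 * P - Q"
    unfolding gg_def A_def P_def Q_def using fA_int AB_int AC_int by simp
  moreover have "(\<integral>x. ff x \<partial>lborel) = Q" unfolding ff_def Q_def ..
  ultimately have id: "(s-1) * A = 2 * P + (n-1) * Q"
    using fubini_identity unfolding n_def by (simp add: algebra_simps)
  define e where "e = \<bar>s-1\<bar> / (n+1)"
  have sp: "\<bar>s-1\<bar> > 0" using s1 by simp
  have e: "e > 0" unfolding e_def using sp n1 by simp
  have P: "2 * \<bar>P\<bar> \<le> e * A + B / e"
    unfolding P_def A_def B_def using int_amgm[OF e fA_int ib AB_int] .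
  have Q: "2 * \<bar>Q\<bar> \<le> e * A + C / e"
    unfolding Q_def A_def C_def using int_amgm[OF e fA_int ic AC_int] .
  have "\<bar>s-1\<bar> * A = \<bar>2 * P + (n-1) * Q\<bar>" using id A0 by (metis abs_mult abs_of_nonneg)
  also have "\<dots> \<le> 2 * \<bar>P\<bar> + (n-1) * \<bar>Q\<bar>" using n1 by (simp add: abs_triangle_ineq[THEN order_trans] abs_mult)
  also have "\<dots> \<le> (e * A + B / e) + (n-1) * ((e * A + C / e) / 2)"
    using P Q n1 by (intro add_mono mult_left_mono) auto
  also have "\<dots> = e * (n+1) / 2 * A + (B + (n-1)/2 * C) / e"
    using e by (simp add: field_simps)
  also have "e * (n+1) / 2 = \<bar>s-1\<bar> / 2" unfolding e_def using n1 by simp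
  finally have "\<bar>s-1\<bar> * A \<le> \<bar>s-1\<bar> / 2 * A + (B + (n-1)/2 * C) / e" .
  then have "\<bar>s-1\<bar> / 2 * A \<le> (B + (n-1)/2 * C) / e" by linarith
  also have "\<dots> \<le> (n * (B + C)) / e"
  proof -
    have h1: "0 \<le> (n-1)*B" using n1 A0 by simp
    have h2: "0 \<le> (n+1)/2*C" using n1 A0 by simp
    have eqn: "n * (B + C) = B + (n-1)/2*C + ((n-1)*B + (n+1)/2*C)"
      by (rule eqn_alg)
    have "B + (n-1)/2 * C \<le> n * (B + C)"
      using h1 h2 eqn by linarith
    then show ?thesis using e by (intro divide_right_mono) auto
  qed
  finally have "\<bar>s-1\<bar> / 2 * A \<le> n * (B + C) / e" .
  moreover have "n * (B + C) / e = n * (n+1) * (B + C) / \<bar>s-1\<bar>"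
    unfolding e_def using sp n1 by (simp add: field_simps)
  ultimately have H: "\<bar>s-1\<bar> / 2 * A \<le> n * (n+1) * (B + C) / \<bar>s-1\<bar>" by simp
  have "A \<le> 2 * (n * (n+1) * (B + C)) / (\<bar>s-1\<bar> * \<bar>s-1\<bar>)"
    by (rule div_step[OF sp H])
  also have "\<bar>s-1\<bar> * \<bar>s-1\<bar> = (s-1)\<^sup>2" by (simp add: power2_eq_square)
  finally have AK: "A \<le> (2 * n * (n + 1) / (s-1)\<^sup>2) * (B + C)" by simp
  have "sqrt A \<le> sqrt (2 * n * (n + 1) / (s-1)\<^sup>2) * sqrt (B + C)"
    using AK by (simp add: real_sqrt_mult[symmetric])
  also have "\<dots> \<le> sqrt (2 * n * (n + 1) / (s-1)\<^sup>2) * (sqrt B + sqrt C)"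
    using A0 n1 by (intro mult_left_mono sqrt_add_le_add_sqrt) auto
  finally show ?thesis unfolding A_def B_def C_def n_def .
qed

end

end

theorem lemma2p1:
  fixes s :: real
  assumes "CARD('n::finite) \<ge> 2" and "s \<noteq> 1"
  shows "\<exists>C. \<forall>k>0. \<forall>(\<phi>::real^'n \<Rightarrow> real) (\<phi>'::real^'n \<Rightarrow> real^'n).
           (\<forall>x. (\<phi> has_derivative (\<lambda>h. \<phi>' x \<bullet> h)) (at x)) \<and> continuous_on UNIV \<phi>'
           \<and> closure {x. \<phi> x \<noteq> 0} \<subseteq> cball 0 k
           \<and> integrable lborel (\<lambda>x. (wt k (s/2) x * radial_deriv \<phi>' x)\<^sup>2)
           \<and> integrable lborel (\<lambda>x. (wt k (s/2) x * (\<phi> x / norm x))\<^sup>2)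
           \<longrightarrow> integrable lborel (\<lambda>x. (wt k ((s-2)/2) x * \<phi> x)\<^sup>2)
             \<and> L2norm (\<lambda>x. wt k ((s-2)/2) x * \<phi> x)
                 \<le> C * (L2norm (\<lambda>x. wt k (s/2) x * radial_deriv \<phi>' x)
                        + L2norm (\<lambda>x. wt k (s/2) x * (\<phi> x / norm x)))"
proof (intro exI allI impI conjI)
  fix k :: real and \<phi> :: "real^'n \<Rightarrow> real" and \<phi>' :: "real^'n \<Rightarrow> real^'n"
  assume kpos: "k > 0"
  assume H: "(\<forall>x. (\<phi> has_derivative (\<lambda>h. \<phi>' x \<bullet> h)) (at x)) \<and> continuous_on UNIV \<phi>'
           \<and> closure {x. \<phi> x \<noteq> 0} \<subseteq> cball 0 k
           \<and> integrable lborel (\<lambda>x. (wt k (s/2) x * radial_deriv \<phi>' x)\<^sup>2)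
           \<and> integrable lborel (\<lambda>x. (wt k (s/2) x * (\<phi> x / norm x))\<^sup>2)"
  then have der: "\<forall>x. (\<phi> has_derivative (\<lambda>h. \<phi>' x \<bullet> h)) (at x)" 
    and contd: "continuous_on UNIV \<phi>'" and supp: "closure {x. \<phi> x \<noteq> 0} \<subseteq> cball 0 k"
    and ib0: "integrable lborel (\<lambda>x. (wt k (s/2) x * radial_deriv \<phi>' x)\<^sup>2)"
    and ic0: "integrable lborel (\<lambda>x. (wt k (s/2) x * (\<phi> x / norm x))\<^sup>2)"
    by auto
  note D = kpos der contd supp
  have ib: "integrable lborel (\<lambda>x. (fB k s \<phi>' x)\<^sup>2)"
    using ib0 by (simp add: fB_def[OF D])
  have ic: "integrable lborel (\<lambda>x. (fC k s \<phi> x)\<^sup>2)"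
    using ic0 by (simp add: fC_def[OF D])
  show "integrable lborel (\<lambda>x. (wt k ((s-2)/2) x * \<phi> x)\<^sup>2)"
    by (rule a_sq_int[OF D])
  show "L2norm (\<lambda>x. wt k ((s-2)/2) x * \<phi> x)
        \<le> sqrt (2 * real CARD('n) * (real CARD('n) + 1) / (s - 1)\<^sup>2) *
          (L2norm (\<lambda>x. wt k (s/2) x * radial_deriv \<phi>' x)
           + L2norm (\<lambda>x. wt k (s/2) x * (\<phi> x / norm x)))"
    using main_ineq[OF D ib ic assms(2)]
    by (simp add: L2norm_def fA_def[OF D] fB_def[OF D] fC_def[OF D])
qed

end
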